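(* Let $u(z)=z+\sum_{n\ge1}u_nz^{n+1}\in\mathbb{C}[[z]]$. For every character $\varphi$ of $\mathcal H_{CK}$ (an algebra morphism $\mathcal H_{CK}\to\mathbb C$, so $\varphi(\emptyset)=1$), one has $$\alpha_u\Big(\sum_{t}\varphi(\mathrm{sk}(t))\,S^t\Big)=\sum_{T}\varphi(T)\,A_T(z),$$ where $t$ runs over reduced plane trees and $T$ over $\mathbb{N}^*$-decorated rooted trees (including the empty tree $\emptyset$). That is, $\alpha_u\circ\mathrm{sk}^*=\rho_u$, where $\mathrm{sk}^*(\varphi)=\varphi\circ\mathrm{sk}$ and $\rho_u(\varphi)(z)=\sum_T\varphi(T)A_T(z)$.
   Context: A reduced plane tree is a rooted plane tree in which every internal vertex has at least two children; $|$ denotes the single-leaf tree. The monomial $S^t$ in noncommuting variables $S_0,S_1,\dots$ is $S^{|}=S_0$ and $S^t=S_{n-1}S^{t_1}\cdots S^{t_n}$ if the root of $t$ has children subtrees $t_1,\dots,t_n$ ($n\ge2$). $\alpha_u$ sends a formal series $\sum_t c_tS^t$ to the formal power series $\sum_t c_t\,\alpha_u(S^t)\in\mathbb{C}[[z]]$, where $\alpha_u(S^t)$ is obtained by replacing $S_0$ by $z$ and $S_n$ by $u_n$ ($n\ge1$) in the commutative product. $\mathcal H_{CK}$ is the commutative polynomial algebra on the non-plane rooted trees with vertices decorated by positive integers (monomials are forests, unit the empty forest $\emptyset$); for a forest $F$, $B_n^+(F)$ is the tree with a new root decorated $n$ attached to the roots of $F$. The skeleton map is $\mathrm{sk}(|)=\emptyset$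 and $\mathrm{sk}(t)=B^+_{n-1}(\mathrm{sk}(t_1)\cdots\mathrm{sk}(t_n))$ if the root of $t$ has children subtrees $t_1,\dots,t_n$. The power series $A_T(z)$ are defined recursively: $A_\emptyset(z)=z$; $A_{B_n^+(\emptyset)}(z)=u_nz^{n+1}$; and if $T=B_n^+(T_1^{a_1}\cdots T_k^{a_k})$ with $T_1,\dots,T_k$ distinct nonempty decorated trees with multiplicities $a_1,\dots,a_k$, then $A_T(z)=\frac{1}{a_1!\cdots a_k!}A_{T_1}(z)^{a_1}\cdots A_{T_k}(z)^{a_k}\,\partial_z^{a_1+\cdots+a_k}\big(u_nz^{n+1}\big)$. *)

theory Defs
  imports "HOL-Library.Multiset" "HOL-Computational_Algebra.Formal_Power_Series"
begin

datatype ptree = PLeaf | PNode "ptree list"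

fun reduced :: "ptree \<Rightarrow> bool" where
  "reduced PLeaf = True"
| "reduced (PNode ts) = (2 \<le> length ts \<and> (\<forall>t\<in>set ts. reduced t))"

text \<open>Noncommutative monomial S^t as the word of indices of its letters S_i.\<close>
fun Smon :: "ptree \<Rightarrow> nat list" where
  "Smon PLeaf = [0]"
| "Smon (PNode ts) = (length ts - 1) # concat (map Smon ts)"

definition alpha_letter :: "(nat \<Rightarrow> complex) \<Rightarrow> nat \<Rightarrow> complex fps" where
  "alpha_letter u i = (if i = 0 then fps_X else fps_const (u i))"

definition alpha_mon :: "(nat \<Rightarrow> complex) \<Rightarrow> nat list \<Rightarrow> complex fps" where
  "alpha_mon u w = prod_list (map (alpha_letter u) w)"

datatype dtree = DNode nat "dtree multiset"

primrec labels :: "dtree \<Rightarrow> nat set" where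
  "labels (DNode n F) = insert n (\<Union> (set_mset (image_mset labels F)))"

definition pos_dec :: "dtree \<Rightarrow> bool" where
  "pos_dec T = (\<forall>n\<in>labels T. 1 \<le> n)"

definition pos_forest :: "dtree multiset \<Rightarrow> bool" where
  "pos_forest F = (\<forall>T\<in>#F. pos_dec T)"

text \<open>Characters of H_CK: determined by values on forests (monomials), unital, multiplicative.\<close>
definition character :: "(dtree multiset \<Rightarrow> complex) \<Rightarrow> bool" where
  "character \<phi> = (\<phi> {#} = 1 \<and>
     (\<forall>F G. pos_forest F \<longrightarrow> pos_forest G \<longrightarrow> \<phi> (F + G) = \<phi> F * \<phi> G))"

fun sk :: "ptree \<Rightarrow> dtree multiset" where
  "sk PLeaf = {#}"
| "sk (PNode ts) = {# DNode (length ts - 1) (sum_list (map sk ts)) #}"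

text \<open>For T = B_n^+(T_1^a_1 ... T_k^a_k):
  A_T = 1/(a_1!...a_k!) * A_{T_1}^a_1 ... A_{T_k}^a_k * d^(a_1+...+a_k)(u_n z^(n+1)).
  The case of the empty forest gives u_n z^(n+1).\<close>
primrec A :: "(nat \<Rightarrow> complex) \<Rightarrow> dtree \<Rightarrow> complex fps" where
  "A u (DNode n F) =
     fps_const (1 / (\<Prod>T\<in>set_mset F. of_nat (fact (count F T))))
     * prod_mset (image_mset (A u) F)
     * (fps_deriv ^^ size F) (fps_const (u n) * fps_X ^ (n + 1))"

text \<open>A_\<emptyset> = z; the empty tree is represented by the empty forest.\<close>
definition A_forest :: "(nat \<Rightarrow> complex) \<Rightarrow> dtree multiset \<Rightarrow> complex fps" where
  "A_forest u F = (if F = {#} then fps_X else A u (the_elem (set_mset F)))"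

definition Tindex :: "dtree multiset set" where
  "Tindex = insert {#} {{#T#} | T. pos_dec T}"

definition fps_locally_finite :: "('a \<Rightarrow> complex fps) \<Rightarrow> 'a set \<Rightarrow> bool" where
  "fps_locally_finite f I = (\<forall>k. finite {i\<in>I. fps_nth (f i) k \<noteq> 0})"

definition fps_fsum :: "('a \<Rightarrow> complex fps) \<Rightarrow> 'a set \<Rightarrow> complex fps" where
  "fps_fsum f I = Abs_fps (\<lambda>k. \<Sum>i\<in>{i\<in>I. fps_nth (f i) k \<noteq> 0}. fps_nth (f i) k)"

end

theory Submission imports Defs begin


lemma D_const: "(fps_deriv ^^ g) (fps_const c * f) = fps_const c * (fps_deriv ^^ g) f"
  by (induction g) auto

lemma D_zero: "(fps_deriv ^^ g) (0::complex fps) = 0"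
  by (induction g) auto

lemma D_one: "(fps_deriv ^^ Suc g) (1::complex fps) = 0"
  by (simp only: funpow_Suc_right o_def fps_deriv_1 D_zero)

lemma D_X: "(fps_deriv ^^ Suc g) (fps_X * (f::complex fps)) =
   fps_X * (fps_deriv ^^ Suc g) f + of_nat (Suc g) * (fps_deriv ^^ g) f"
proof (induction g)
  case 0 then show ?case by (simp add: algebra_simps)
next
  case (Suc g)
  define a where "a = (fps_deriv ^^ g) f"
  have e: "(fps_deriv ^^ Suc g) f = fps_deriv a" "(fps_deriv ^^ Suc (Suc g)) f = fps_deriv (fps_deriv a)" unfolding a_def by simp_all
  have "(fps_deriv ^^ Suc (Suc g)) (fps_X * f) = fps_deriv ((fps_deriv ^^ Suc g) (fps_X * f))" by simp
  also have "\<dots> = fps_deriv (fps_X * fps_deriv a + of_nat (Suc g) * a)"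
    using Suc by (simp only: e a_def)
  also have "\<dots> = fps_X * fps_deriv (fps_deriv a) + of_nat (Suc (Suc g)) * fps_deriv a"
    proof -
      have "fps_deriv (of_nat (Suc g) * a) = of_nat (Suc g) * fps_deriv a" by (metis fps_deriv_mult_const_left fps_of_nat)
      then show ?thesis by (simp add: distrib_right)
    qed
  finally show ?case by (simp only: e)
qed

definition cc :: "dtree multiset \<Rightarrow> complex" where
  "cc G = (\<Prod>T\<in>set_mset G. of_nat (fact (count G T)))"

lemma cc_nz: "cc G \<noteq> 0"
  unfolding cc_def by (simp)

lemma cc_remove: assumes "T \<in># G" shows "cc G = of_nat (count G T) * cc (G - {#T#})"
proof -
  have "cc (G - {#T#}) = (\<Prod>T'\<in>set_mset G. of_nat (fact (count (G - {#T#}) T')))"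
    unfolding cc_def
  proof (rule prod.mono_neutral_left)
    show "set_mset (G - {#T#}) \<subseteq> set_mset G" by (meson in_diffD subsetI)
    show "\<forall>i\<in>set_mset G - set_mset (G - {#T#}). (of_nat (fact (count (G - {#T#}) i)) :: complex) = 1"
    proof
      fix i assume "i \<in> set_mset G - set_mset (G - {#T#})"
      then have "count (G - {#T#}) i = 0" by (simp add: not_in_iff)
      then show "(of_nat (fact (count (G - {#T#}) i)) :: complex) = 1" by simp
    qed
  qed auto
  also have "\<dots> = of_nat (fact (count G T - 1)) * (\<Prod>T'\<in>set_mset G - {T}. of_nat (fact (count (G - {#T#}) T')))"
    using assms by (subst prod.remove[of _ T]) auto
  also have "(\<Prod>T'\<in>set_mset G - {T}. of_nat (fact (count (G - {#T#}) T')) :: complex) =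
     (\<Prod>T'\<in>set_mset G - {T}. of_nat (fact (count G T')))"
    by (rule prod.cong) auto
  finally have 1: "cc (G - {#T#}) = of_nat (fact (count G T - 1)) * (\<Prod>T'\<in>set_mset G - {T}. of_nat (fact (count G T')))" .
  have "cc G = of_nat (fact (count G T)) * (\<Prod>T'\<in>set_mset G - {T}. of_nat (fact (count G T')))"
    unfolding cc_def using assms by (subst prod.remove[of _ T]) auto
  moreover have "fact (count G T) = count G T * fact (count G T - 1)"
  proof -
    have "count G T = Suc (count G T - 1)" using assms by (simp add: Suc_pred)
    then show ?thesis by (metis fact_reduce of_nat_id zero_less_Suc)
  qed
  ultimately show ?thesis using 1 by (simp only: of_nat_mult mult.assoc)
qed



definition P :: "dtree multiset \<Rightarrow> ptree set" where "P F = {t. reduced t \<and> sk t = F}"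
definition L :: "nat \<Rightarrow> dtree multiset \<Rightarrow> ptree list set" where
  "L m G = {ts. length ts = m \<and> (\<forall>t\<in>set ts. reduced t) \<and> sum_list (map sk ts) = G}"
definition atr :: "(nat \<Rightarrow> complex) \<Rightarrow> ptree \<Rightarrow> complex fps" where "atr u t = alpha_mon u (Smon t)"
definition al :: "(nat \<Rightarrow> complex) \<Rightarrow> ptree list \<Rightarrow> complex fps" where "al u ts = prod_list (map (atr u) ts)"
definition Fs :: "dtree multiset \<Rightarrow> dtree multiset set" where
  "Fs G = insert {#} ((\<lambda>T. {#T#}) ` set_mset G)"

lemma at_leaf: "atr u PLeaf = fps_X"
  by (simp add: atr_def alpha_mon_def alpha_letter_def)

lemma al_concat: "prod_list (map (alpha_letter u) (concat (map Smon ts))) = al u ts"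
  by (induction ts) (auto simp: al_def atr_def alpha_mon_def)

lemma at_node: "atr u (PNode ts) = alpha_letter u (length ts - 1) * al u ts"
  by (simp add: atr_def alpha_mon_def al_concat)

lemma sk_cases: "sk t = {#} \<or> (\<exists>T. sk t = {#T#})"
  by (cases t) auto

lemma P_empty: "P {#} = {PLeaf}"
proof -
  have "sk t = {#} \<longleftrightarrow> t = PLeaf" for t by (cases t) simp_all
  then show ?thesis unfolding P_def by force
qed

lemma L_0: "L 0 G = (if G = {#} then {[]} else {})"
  by (auto simp: L_def)

lemma L_Suc: "L (Suc m) G = (\<Union>F\<in>Fs G. (\<lambda>(t,ts). t#ts) ` (P F \<times> L m (G - F)))"
proof (intro equalityI subsetI)
  fix xs assume "xs \<in> L (Suc m) G"
  then obtain t ts where xs: "xs = t # ts" and len: "length ts = m" and r: "reduced t" "\<forall>t\<in>set ts. reduced t"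
    and s: "sk t + sum_list (map sk ts) = G"
    by (cases xs) (auto simp: L_def)
  have "sk t \<in> Fs G" using sk_cases[of t] s by (auto simp: Fs_def)
  moreover have "t \<in> P (sk t)" using r by (simp add: P_def)
  moreover have "ts \<in> L m (G - sk t)" using len r s by (auto simp: L_def)
  ultimately show "xs \<in> (\<Union>F\<in>Fs G. (\<lambda>(t,ts). t#ts) ` (P F \<times> L m (G - F)))"
    using xs by blast
next
  fix xs assume "xs \<in> (\<Union>F\<in>Fs G. (\<lambda>(t,ts). t#ts) ` (P F \<times> L m (G - F)))"
  then obtain F t ts where F: "F \<in> Fs G" and xs: "xs = t # ts" and t: "t \<in> P F" and ts: "ts \<in> L m (G - F)"
    by auto
  have "F \<subseteq># G" using F by (auto simp: Fs_def)
  then have "F + (G - F) = G" by (simp add: subset_mset.add_diff_inverse)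
  moreover have "sk t = F" "reduced t" using t by (auto simp: P_def)
  moreover have "length ts = m" "\<forall>t\<in>set ts. reduced t" "sum_list (map sk ts) = G - F"
    using ts by (auto simp: L_def)
  ultimately show "xs \<in> L (Suc m) G" using xs unfolding L_def by simp
qed


lemma sum_cons_prod:
  "sum (\<lambda>(t,ts). al u (t#ts)) (X \<times> Y) = sum (atr u) X * sum (al u) Y"
  by (simp add: sum_product sum.cartesian_product al_def)

lemma prodA_remove: "T \<in># G \<Longrightarrow> prod_mset (image_mset (A u) G) = A u T * prod_mset (image_mset (A u) (G - {#T#}))"
  by (metis image_mset_add_mset insert_DiffM prod_mset.add_mset)

definition Hyp :: "(nat \<Rightarrow> complex) \<Rightarrow> dtree multiset \<Rightarrow> bool" where
  "Hyp u G = (\<forall>T\<in>#G. finite (P {#T#}) \<and> sum (atr u) (P {#T#}) = A u T)"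

lemma L_main:
  assumes "Hyp u G"
  shows "finite (L m G) \<and> fps_const (cc G) * sum (al u) (L m G)
      = prod_mset (image_mset (A u) G) * (fps_deriv ^^ size G) (fps_X ^ m)"
  using assms
proof (induction m arbitrary: G)
  case 0
  show ?case
  proof (cases "G = {#}")
    case True
    then show ?thesis by (simp add: L_0 cc_def al_def)
  next
    case False
    then obtain k where k: "size G = Suc k" by (cases "size G") auto
    have "(fps_deriv ^^ size G) (fps_X ^ 0) = (0::complex fps)" unfolding k power_0 by (rule D_one)
    then show ?thesis using False by (simp add: L_0)
  qed
next
  case (Suc m G)
  have HP: "Hyp u (G - F)" for F
    using Suc.prems unfolding Hyp_def by (meson in_diffD)
  have IH: "finite (L m (G - F)) \<and> fps_const (cc (G - F)) * sum (al u) (L m (G - F))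
      = prod_mset (image_mset (A u) (G - F)) * (fps_deriv ^^ size (G - F)) (fps_X ^ m)" for F
    using Suc.IH[OF HP] .
  have finP: "finite (P F)" if "F \<in> Fs G" for F
    using that Suc.prems unfolding Fs_def Hyp_def by (auto simp: P_empty)
  have finFs: "finite (Fs G)" by (simp add: Fs_def)
  let ?C = "\<lambda>(t::ptree,ts). t#ts"
  have inj: "inj ?C" by (auto simp: inj_def)
  have fin: "finite (?C ` (P F \<times> L m (G - F)))" if "F \<in> Fs G" for F
    using finP[OF that] IH[of F] by simp
  have disj: "\<forall>F\<in>Fs G. \<forall>F'\<in>Fs G. F \<noteq> F' \<longrightarrow> ?C ` (P F \<times> L m (G - F)) \<inter> ?C ` (P F' \<times> L m (G - F')) = {}"
    by (auto simp: P_def)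
  have finL: "finite (L (Suc m) G)" unfolding L_Suc using finFs fin by blast
  have "sum (al u) (L (Suc m) G) = (\<Sum>F\<in>Fs G. sum (al u) (?C ` (P F \<times> L m (G - F))))"
    unfolding L_Suc by (rule sum.UNION_disjoint[OF finFs _ disj]) (use fin in blast)
  also have "\<dots> = (\<Sum>F\<in>Fs G. sum (atr u) (P F) * sum (al u) (L m (G - F)))"
  proof (rule sum.cong[OF refl])
    fix F assume "F \<in> Fs G"
    have "sum (al u) (?C ` (P F \<times> L m (G - F))) = sum (al u \<circ> ?C) (P F \<times> L m (G - F))"
      by (rule sum.reindex) (use inj in \<open>auto simp: inj_on_def\<close>)
    also have "\<dots> = sum (\<lambda>(t,ts). al u (t#ts)) (P F \<times> L m (G - F))"
      by (rule sum.cong) auto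
    finally show "sum (al u) (?C ` (P F \<times> L m (G - F))) = sum (atr u) (P F) * sum (al u) (L m (G - F))"
      by (simp add: sum_cons_prod)
  qed
  also have "\<dots> = fps_X * sum (al u) (L m G)
     + (\<Sum>T\<in>set_mset G. A u T * sum (al u) (L m (G - {#T#})))"
  proof -
    have nin: "{#} \<notin> (\<lambda>T. {#T#}) ` set_mset G" by auto
    have injs: "inj_on (\<lambda>T. {#T#}) (set_mset G)" by (auto simp: inj_on_def)
    have "(\<Sum>F\<in>Fs G. sum (atr u) (P F) * sum (al u) (L m (G - F)))
       = sum (atr u) (P {#}) * sum (al u) (L m (G - {#}))
       + (\<Sum>F\<in>(\<lambda>T. {#T#}) ` set_mset G. sum (atr u) (P F) * sum (al u) (L m (G - F)))"
      unfolding Fs_def by (rule sum.insert) (use nin in auto)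
    also have "(\<Sum>F\<in>(\<lambda>T. {#T#}) ` set_mset G. sum (atr u) (P F) * sum (al u) (L m (G - F)))
       = (\<Sum>T\<in>set_mset G. sum (atr u) (P {#T#}) * sum (al u) (L m (G - {#T#})))"
      by (subst sum.reindex[OF injs]) simp
    also have "\<dots> = (\<Sum>T\<in>set_mset G. A u T * sum (al u) (L m (G - {#T#})))"
      using Suc.prems unfolding Hyp_def by (intro sum.cong) auto
    finally show ?thesis by (simp add: P_empty at_leaf)
  qed
  finally have S: "sum (al u) (L (Suc m) G) = fps_X * sum (al u) (L m G)
     + (\<Sum>T\<in>set_mset G. A u T * sum (al u) (L m (G - {#T#})))" .
  define PA where "PA = prod_mset (image_mset (A u) G)"
  have t2: "fps_const (cc G) * (A u T * sum (al u) (L m (G - {#T#})))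
      = of_nat (count G T) * (PA * (fps_deriv ^^ (size G - 1)) (fps_X ^ m))" if T: "T \<in># G" for T
  proof -
    have "fps_const (cc G) * (A u T * sum (al u) (L m (G - {#T#})))
       = of_nat (count G T) * A u T * (fps_const (cc (G - {#T#})) * sum (al u) (L m (G - {#T#})))"
      by (simp add: cc_remove[OF T] fps_of_nat[symmetric] fps_const_mult[symmetric] algebra_simps del: fps_const_mult)
    also have "\<dots> = of_nat (count G T) * A u T * (prod_mset (image_mset (A u) (G - {#T#})) * (fps_deriv ^^ (size G - 1)) (fps_X ^ m))"
      using IH[of "{#T#}"] T by (simp add: size_Diff_singleton)
    also have "\<dots> = of_nat (count G T) * (PA * (fps_deriv ^^ (size G - 1)) (fps_X ^ m))"
      unfolding PA_def prodA_remove[OF T] by (simp add: algebra_simps)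
    finally show ?thesis .
  qed
  have "fps_const (cc G) * sum (al u) (L (Suc m) G)
      = fps_X * (fps_const (cc G) * sum (al u) (L m G))
        + (\<Sum>T\<in>set_mset G. fps_const (cc G) * (A u T * sum (al u) (L m (G - {#T#}))))"
    unfolding S by (simp add: algebra_simps sum_distrib_left)
  also have "\<dots> = fps_X * (PA * (fps_deriv ^^ size G) (fps_X ^ m))
        + (\<Sum>T\<in>set_mset G. of_nat (count G T) * (PA * (fps_deriv ^^ (size G - 1)) (fps_X ^ m)))"
    using IH[of "{#}"] t2 unfolding PA_def by simp
  also have "\<dots> = fps_X * (PA * (fps_deriv ^^ size G) (fps_X ^ m))
        + of_nat (size G) * (PA * (fps_deriv ^^ (size G - 1)) (fps_X ^ m))"
    by (simp add: sum_distrib_right[symmetric] size_multiset_overloaded_eq[of G])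
  also have "\<dots> = PA * (fps_deriv ^^ size G) (fps_X ^ Suc m)"
  proof (cases "size G")
    case 0
    then show ?thesis by (simp add: algebra_simps)
  next
    case (Suc k)
    have "(fps_deriv ^^ size G) (fps_X ^ Suc m :: complex fps) = fps_X * (fps_deriv ^^ Suc k) (fps_X ^ m) + of_nat (Suc k) * (fps_deriv ^^ k) (fps_X ^ m)"
      unfolding Suc power_Suc by (metis D_X)
    then show ?thesis using Suc by (simp add: algebra_simps)
  qed
  finally show ?case using finL unfolding PA_def by simp
qed


lemma pos_dec_DNode: "pos_dec (DNode n G) \<longleftrightarrow> 1 \<le> n \<and> (\<forall>T\<in>#G. pos_dec T)"
  by (auto simp: pos_dec_def)

lemma P_node: assumes "1 \<le> n" shows "P {#DNode n G#} = PNode ` L (Suc n) G"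
proof (intro equalityI subsetI)
  fix t assume "t \<in> P {#DNode n G#}"
  then have r: "reduced t" and s: "sk t = {#DNode n G#}" by (auto simp: P_def)
  then obtain ts where t: "t = PNode ts" by (cases t) auto
  have "length ts - 1 = n" "sum_list (map sk ts) = G" using s t by auto
  moreover have "2 \<le> length ts" "\<forall>t\<in>set ts. reduced t" using r t by auto
  ultimately have "ts \<in> L (Suc n) G" unfolding L_def by auto
  then show "t \<in> PNode ` L (Suc n) G" using t by blast
next
  fix t assume "t \<in> PNode ` L (Suc n) G"
  then obtain ts where t: "t = PNode ts" and ts: "length ts = Suc n" "\<forall>t\<in>set ts. reduced t" "sum_list (map sk ts) = G"
    by (auto simp: L_def)
  have "reduced t" using t ts assms by simp
  moreover have "sk t = {#DNode n G#}" using t ts by simp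
  ultimately show "t \<in> P {#DNode n G#}" by (simp add: P_def)
qed

lemma tree_main: "pos_dec T \<Longrightarrow> finite (P {#T#}) \<and> sum (atr u) (P {#T#}) = A u T"
proof (induction T rule: dtree.induct)
  case (DNode n G)
  have n: "1 \<le> n" and pG: "\<forall>T\<in>#G. pos_dec T" using DNode.prems by (auto simp: pos_dec_DNode)
  have H: "Hyp u G" unfolding Hyp_def using DNode.IH pG by blast
  have LM: "finite (L (Suc n) G)" "fps_const (cc G) * sum (al u) (L (Suc n) G)
      = prod_mset (image_mset (A u) G) * (fps_deriv ^^ size G) (fps_X ^ Suc n)"
    using L_main[OF H, of "Suc n"] by auto
  have fin: "finite (P {#DNode n G#})" unfolding P_node[OF n] using LM(1) by simp
  have "sum (atr u) (P {#DNode n G#}) = sum (atr u \<circ> PNode) (L (Suc n) G)"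
    unfolding P_node[OF n] by (rule sum.reindex) (auto simp: inj_on_def)
  also have "\<dots> = sum (\<lambda>ts. fps_const (u n) * al u ts) (L (Suc n) G)"
    using n by (intro sum.cong) (auto simp: L_def at_node alpha_letter_def)
  also have "\<dots> = fps_const (u n) * sum (al u) (L (Suc n) G)"
    by (simp add: sum_distrib_left)
  finally have S: "sum (atr u) (P {#DNode n G#}) = fps_const (u n) * sum (al u) (L (Suc n) G)" .
  have "A u (DNode n G) = fps_const (1 / cc G) * prod_mset (image_mset (A u) G)
       * (fps_const (u n) * (fps_deriv ^^ size G) (fps_X ^ Suc n))"
    by (simp add: cc_def D_const)
  also have "\<dots> = fps_const (1 / cc G) * fps_const (u n) * (fps_const (cc G) * sum (al u) (L (Suc n) G))"
  proof -
    have "fps_const (1 / cc G) * prod_mset (image_mset (A u) G)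
       * (fps_const (u n) * (fps_deriv ^^ size G) (fps_X ^ Suc n))
       = fps_const (1 / cc G) * fps_const (u n) * (prod_mset (image_mset (A u) G) * (fps_deriv ^^ size G) (fps_X ^ Suc n))"
      by (simp only: mult.assoc mult.left_commute)
    then show ?thesis by (simp only: LM(2))
  qed
  also have "\<dots> = fps_const (u n) * sum (al u) (L (Suc n) G)"
  proof -
    have "fps_const (1 / cc G) * fps_const (cc G) = 1"
      using cc_nz[of G] by (metis fps_const_mult fps_const_1_eq_1 nonzero_divide_eq_eq)
    then show ?thesis by (metis (no_types, lifting) mult.assoc mult.commute mult.left_neutral)
  qed
  finally show ?case using fin S by simp
qed


fun lv :: "ptree \<Rightarrow> nat" where
  "lv PLeaf = 1"
| "lv (PNode ts) = sum_list (map lv ts)"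

lemma atr_mono: "reduced t \<Longrightarrow> \<exists>c. atr u t = fps_const c * fps_X ^ lv t"
proof (induction t)
  case PLeaf then show ?case by (auto simp: at_leaf intro: exI[of _ 1])
next
  case (PNode ts)
  have "\<exists>c. al u ts = fps_const c * fps_X ^ sum_list (map lv ts)"
    using PNode.IH PNode.prems[unfolded reduced.simps, THEN conjunct2]
  proof (induction ts)
    case Nil then show ?case by (auto simp: al_def intro: exI[of _ 1])
  next
    case (Cons t ts)
    obtain c where c1: "atr u t = fps_const c * fps_X ^ lv t" using Cons.prems(1)[of t] Cons.prems(2) by auto
    obtain d where d1: "al u ts = fps_const d * fps_X ^ sum_list (map lv ts)" using Cons.IH Cons.prems by auto
    from c1 d1 have "al u (t#ts) = fps_const (c*d) * fps_X ^ sum_list (map lv (t#ts))"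
      by (simp add: al_def power_add algebra_simps)
    then show ?case by blast
  qed
  then obtain c where c: "al u ts = fps_const c * fps_X ^ sum_list (map lv ts)" by blast
  have "\<exists>e. alpha_letter u (length ts - 1) = fps_const e"
    using PNode.prems by (auto simp: alpha_letter_def)
  then obtain e where "alpha_letter u (length ts - 1) = fps_const e" by blast
  then have "atr u (PNode ts) = fps_const (e*c) * fps_X ^ lv (PNode ts)"
    by (simp add: at_node c algebra_simps)
  then show ?case by blast
qed

lemma atr_nth: "reduced t \<Longrightarrow> fps_nth (atr u t) k \<noteq> 0 \<Longrightarrow> k = lv t"
  using atr_mono[of t u] by (auto simp: fps_X_power_mult_nth split: if_splits)

lemma lv_pos: "reduced t \<Longrightarrow> 1 \<le> lv t"
proof (induction t)
  case PLeaf then show ?case by simp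
next
  case (PNode ts)
  then obtain t where t: "t \<in> set ts" by (cases ts) auto
  then have "lv t \<le> sum_list (map lv ts)" by (simp add: member_le_sum_list)
  then show ?case using PNode t by fastforce
qed

lemma finite_R: "finite {t. reduced t \<and> lv t \<le> k}"
proof (induction k)
  case 0
  have "{t. reduced t \<and> lv t \<le> 0} = {}" using lv_pos by fastforce
  then show ?case by (metis finite.emptyI)
next
  case (Suc k)
  let ?R = "{t. reduced t \<and> lv t \<le> k}"
  have "{t. reduced t \<and> lv t \<le> Suc k} \<subseteq> insert PLeaf (PNode ` {ts. set ts \<subseteq> ?R \<and> length ts \<le> Suc k})"
  proof
    fix t assume t: "t \<in> {t. reduced t \<and> lv t \<le> Suc k}"
    show "t \<in> insert PLeaf (PNode ` {ts. set ts \<subseteq> ?R \<and> length ts \<le> Suc k})"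
    proof (cases t)
      case PLeaf then show ?thesis by simp
    next
      case (PNode ts)
      have r: "2 \<le> length ts" "\<forall>s\<in>set ts. reduced s" and l: "sum_list (map lv ts) \<le> Suc k"
        using t PNode by auto
      have "length ts \<le> sum_list (map lv ts)"
      proof -
        have "sum_list (map (\<lambda>_. 1::nat) ts) \<le> sum_list (map lv ts)"
          by (rule sum_list_mono) (use r lv_pos in auto)
        then show ?thesis by (simp add: sum_list_triv)
      qed
      moreover have "lv s \<le> k" if s: "s \<in> set ts" for s
      proof -
        have e: "sum_list (map lv ts) = lv s + sum_list (map lv (remove1 s ts))"
          using s by (rule sum_list_map_remove1)
        have "remove1 s ts \<noteq> []" using r s by (metis length_remove1 One_nat_def diff_is_0_eq
             le_numeral_extra(4) length_0_conv not_numeral_le_zero numeral_le_one_iff semiring_norm(69)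
             Suc_1 Suc_le_eq diff_Suc_1 length_pos_if_in_set less_eq_Suc_le not_less_eq_eq)
        then obtain s' where s': "s' \<in> set (remove1 s ts)" by (cases "remove1 s ts") auto
        then have "s' \<in> set ts" by (meson notin_set_remove1)
        then have "1 \<le> lv s'" using r lv_pos by auto
        moreover have "lv s' \<le> sum_list (map lv (remove1 s ts))" using s' by (simp add: member_le_sum_list)
        ultimately show ?thesis using e l by linarith
      qed
      ultimately show ?thesis using PNode r l by auto
    qed
  qed
  moreover have "finite (insert PLeaf (PNode ` {ts. set ts \<subseteq> ?R \<and> length ts \<le> Suc k}))"
    using finite_lists_length_le[OF Suc.IH] by simp
  ultimately show ?case by (rule finite_subset)
qed

lemma sk_pos: "reduced t \<Longrightarrow> \<forall>T\<in>#sk t. pos_dec T"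
proof (induction t)
  case PLeaf then show ?case by simp
next
  case (PNode ts)
  have "\<forall>T\<in>#sum_list (map sk ts). pos_dec T"
    using PNode by (auto simp: set_mset_sum_list)
  then show ?case using PNode.prems by (auto simp: pos_dec_DNode)
qed


notation fps_nth (infixl "$$" 75)

lemma core_forest: assumes "F \<in> Tindex" shows "finite (P F) \<and> sum (atr u) (P F) = A_forest u F"
proof (cases "F = {#}")
  case True then show ?thesis by (simp add: P_empty A_forest_def at_leaf)
next
  case False
  then obtain T where F: "F = {#T#}" "pos_dec T" using assms by (auto simp: Tindex_def)
  then show ?thesis using tree_main[OF F(2), of u] by (simp add: A_forest_def)
qed

lemma sk_Tindex: "reduced t \<Longrightarrow> sk t \<in> Tindex"
  using sk_pos[of t] sk_cases[of t] by (auto simp: Tindex_def)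

theorem mainTheorem9:
  fixes u :: "nat \<Rightarrow> complex" and \<phi> :: "dtree multiset \<Rightarrow> complex"
  assumes "character \<phi>"
  shows "fps_locally_finite (\<lambda>t. fps_const (\<phi> (sk t)) * alpha_mon u (Smon t)) {t. reduced t}
       \<and> fps_locally_finite (\<lambda>F. fps_const (\<phi> F) * A_forest u F) Tindex
       \<and> fps_fsum (\<lambda>t. fps_const (\<phi> (sk t)) * alpha_mon u (Smon t)) {t. reduced t}
         = fps_fsum (\<lambda>F. fps_const (\<phi> F) * A_forest u F) Tindex"
proof -
  define f where "f = (\<lambda>t. fps_const (\<phi> (sk t)) * alpha_mon u (Smon t))"
  define g where "g = (\<lambda>F. fps_const (\<phi> F) * A_forest u F)"
  define R where "R k = {t. reduced t \<and> lv t = k}" for k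
  have finR: "finite (R k)" for k
    unfolding R_def by (rule finite_subset[OF _ finite_R[of k]]) auto
  have fnth: "f t $$ k = \<phi> (sk t) * atr u t $$ k" for t k by (simp add: f_def atr_def)
  have gnth: "g F $$ k = \<phi> F * A_forest u F $$ k" for F k by (simp add: g_def)
  have sf: "{t\<in>{t. reduced t}. f t $$ k \<noteq> 0} \<subseteq> R k" for k
    using atr_nth by (auto simp: fnth R_def)
  have Anth: "A_forest u F $$ k = (\<Sum>t\<in>P F. atr u t $$ k)" if "F \<in> Tindex" for F k
    using core_forest[OF that, of u] by (metis fps_sum_nth)
  have sg: "{F\<in>Tindex. g F $$ k \<noteq> 0} \<subseteq> sk ` R k" for k
  proof
    fix F assume "F \<in> {F\<in>Tindex. g F $$ k \<noteq> 0}"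
    then have F: "F \<in> Tindex" and nz: "A_forest u F $$ k \<noteq> 0" by (auto simp: gnth)
    then have "(\<Sum>t\<in>P F. atr u t $$ k) \<noteq> 0" using Anth by simp
    then obtain t where t: "t \<in> P F" "atr u t $$ k \<noteq> 0" by (meson sum.neutral)
    then have "t \<in> R k" "sk t = F" using atr_nth by (auto simp: P_def R_def)
    then show "F \<in> sk ` R k" by blast
  qed
  have lf1: "fps_locally_finite f {t. reduced t}"
    unfolding fps_locally_finite_def using sf finR by (meson finite_subset)
  have lf2: "fps_locally_finite g Tindex"
    unfolding fps_locally_finite_def using sg finR by (meson finite_subset finite_imageI)
  have eq: "fps_fsum f {t. reduced t} $$ k = fps_fsum g Tindex $$ k" for k
  proof -
    have skR: "sk ` R k \<subseteq> Tindex" using sk_Tindex by (auto simp: R_def)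
    have "fps_fsum f {t. reduced t} $$ k = (\<Sum>t\<in>R k. f t $$ k)"
      unfolding fps_fsum_def fps_nth_Abs_fps
      by (rule sum.mono_neutral_left[OF finR sf]) (auto simp: R_def)
    also have "\<dots> = (\<Sum>F\<in>sk ` R k. \<Sum>t\<in>{t\<in>R k. sk t = F}. f t $$ k)"
      by (rule sum.image_gen[OF finR])
    also have "\<dots> = (\<Sum>F\<in>sk ` R k. g F $$ k)"
    proof (rule sum.cong[OF refl])
      fix F assume F: "F \<in> sk ` R k"
      then have FT: "F \<in> Tindex" using skR by blast
      have "(\<Sum>t\<in>{t\<in>R k. sk t = F}. f t $$ k) = (\<Sum>t\<in>{t\<in>R k. sk t = F}. \<phi> F * atr u t $$ k)"
        by (rule sum.cong) (auto simp: fnth)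
      also have "\<dots> = (\<Sum>t\<in>P F. \<phi> F * atr u t $$ k)"
        by (rule sum.mono_neutral_left) (use core_forest[OF FT, of u] atr_nth in \<open>auto simp: P_def R_def\<close>)
      also have "\<dots> = g F $$ k" by (simp add: gnth Anth[OF FT] sum_distrib_left)
      finally show "(\<Sum>t\<in>{t\<in>R k. sk t = F}. f t $$ k) = g F $$ k" .
    qed
    also have "\<dots> = fps_fsum g Tindex $$ k"
      unfolding fps_fsum_def fps_nth_Abs_fps
      by (rule sum.mono_neutral_right[OF finite_imageI[OF finR] sg]) (use skR in auto)
    finally show ?thesis .
  qed
  show ?thesis using lf1 lf2 eq unfolding f_def[symmetric] g_def[symmetric] by (simp add: fps_ext)
qed

end
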